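(* Let $a$ be a strongly regular scale factor (extended evenly to negative arguments). Then the function \[ g_{\tau\tau}(\tau,\rho)=-\big[1-\dot a(\tau)\,f(\tau,t_0(\tau,\rho))\big]^2 \] is continuous on $D=\{(\tau,\rho):\tau>0,\ 0<\rho<2\rho_{\mathcal M_\tau}\}$.
   Context: A function $a:[0,\infty)\to[0,\infty)$ is a regular scale factor if: (a) $a(0)=0$; (b) $a$ is increasing and continuous on $[0,\infty)$, twice continuously differentiable on $(0,\infty)$, with an inverse function on $[0,\infty)$; (c) $\frac{a(t)\ddot a(t)}{\dot a(t)^2}\le1$ for all $t>0$ (presupposing $\dot a(t)\ne0$). It is strongly regular if also $\frac{a\ddot a}{\dot a^2}\ge-K$ on $(0,\infty)$ for a constant $K\ge1$. Extend $a$ by $a(-t)=a(t)$. For $\tau>0$ let $\rho_{\mathcal M_\tau}=\int_0^\tau\frac{a(t)}{\sqrt{a^2(\tau)-a^2(t)}}dt$. For $(\tau,\rho)\in D$, $t_0(\tau,\rho)$ is the unique $t_0\in(-\tau,\tau)$ with $\rho=\int_{t_0}^\tau\frac{a(t)}{\sqrt{a^2(\tau)-a^2(t)}}dt$. For $0\le t_0<\tau$, \[ f(\tau,t_0)=\int_{t_0}^{\tau}\frac{\ddot a(t)}{\dot a(t)^2}\left(\frac{\sqrt{a^2(\tau)-a^2(t_0)}}{\sqrt{a^2(\tau)-a^2(t)}}-1\right)dt, \] and for $-\tau<t_0<0$, $f(\tau,t_0)=2f(\tau,0)-f(\tau,-t_0)$. *)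

theory Defs
  imports "HOL-Analysis.Analysis"
begin

definition regular_scale_factor :: "(real \<Rightarrow> real) \<Rightarrow> bool" where
  "regular_scale_factor a \<longleftrightarrow>
     a 0 = 0 \<and>
     (\<forall>t\<ge>0. a t \<ge> 0) \<and>
     strict_mono_on {0..} a \<and>
     continuous_on {0..} a \<and>
     (\<forall>t>0. (a has_real_derivative deriv a t) (at t)) \<and>
     (\<forall>t>0. (deriv a has_real_derivative deriv (deriv a) t) (at t)) \<and>
     continuous_on {0<..} (deriv (deriv a)) \<and>
     (\<forall>t>0. deriv a t \<noteq> 0) \<and>
     (\<forall>t>0. a t * deriv (deriv a) t / (deriv a t)\<^sup>2 \<le> 1)"

definition strongly_regular_scale_factor :: "(real \<Rightarrow> real) \<Rightarrow> bool" where
  "strongly_regular_scale_factor a \<longleftrightarrow>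
     regular_scale_factor a \<and>
     (\<exists>K\<ge>1. \<forall>t>0. a t * deriv (deriv a) t / (deriv a t)\<^sup>2 \<ge> - K)"

definition aext :: "(real \<Rightarrow> real) \<Rightarrow> real \<Rightarrow> real" where
  "aext a t = a \<bar>t\<bar>"

text \<open>Integral of a(t)/sqrt(a(tau)^2-a(t)^2) from s to tau (improper at tau; HK integral).\<close>
definition rho_int :: "(real \<Rightarrow> real) \<Rightarrow> real \<Rightarrow> real \<Rightarrow> real" where
  "rho_int a \<tau> s = integral {s..\<tau>}
      (\<lambda>t. aext a t / sqrt ((aext a \<tau>)\<^sup>2 - (aext a t)\<^sup>2))"

definition rho_M :: "(real \<Rightarrow> real) \<Rightarrow> real \<Rightarrow> real" where
  "rho_M a \<tau> = rho_int a \<tau> 0"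

definition domD :: "(real \<Rightarrow> real) \<Rightarrow> (real \<times> real) set" where
  "domD a = {(\<tau>, \<rho>). \<tau> > 0 \<and> 0 < \<rho> \<and> \<rho> < 2 * rho_M a \<tau>}"

definition t0 :: "(real \<Rightarrow> real) \<Rightarrow> real \<Rightarrow> real \<Rightarrow> real" where
  "t0 a \<tau> \<rho> = (THE s. s \<in> {-\<tau><..<\<tau>} \<and> \<rho> = rho_int a \<tau> s)"

definition f_pos :: "(real \<Rightarrow> real) \<Rightarrow> real \<Rightarrow> real \<Rightarrow> real" where
  "f_pos a \<tau> s = integral {s..\<tau>}
      (\<lambda>t. deriv (deriv a) t / (deriv a t)\<^sup>2 *
           (sqrt ((a \<tau>)\<^sup>2 - (a s)\<^sup>2) / sqrt ((a \<tau>)\<^sup>2 - (a t)\<^sup>2) - 1))"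

definition f :: "(real \<Rightarrow> real) \<Rightarrow> real \<Rightarrow> real \<Rightarrow> real" where
  "f a \<tau> s = (if s \<ge> 0 then f_pos a \<tau> s else 2 * f_pos a \<tau> 0 - f_pos a \<tau> (- s))"

definition g_tautau :: "(real \<Rightarrow> real) \<Rightarrow> real \<times> real \<Rightarrow> real" where
  "g_tautau a = (\<lambda>(\<tau>, \<rho>). - (1 - deriv a \<tau> * f a \<tau> (t0 a \<tau> \<rho>))\<^sup>2)"

end

theory Submission
  imports Defs
begin


lemma inv_sqrt_has_integral: "((\<lambda>x::real. 1 / sqrt (1 - x)) has_integral 2) {0<..<1}"
proof -
  have "((\<lambda>x::real. 1 / sqrt (1 - x)) has_integral (- 2 * sqrt (1 - 1)) - (- 2 * sqrt (1 - 0))) {0..1}"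
  proof (rule fundamental_theorem_of_calculus_interior)
    show "continuous_on {0..1} (\<lambda>x::real. - 2 * sqrt (1 - x))"
      by (intro continuous_intros)
    fix x :: real assume x: "x \<in> {0<..<1}"
    show "((\<lambda>x. - 2 * sqrt (1 - x)) has_vector_derivative 1 / sqrt (1 - x)) (at x)"
      unfolding has_real_derivative_iff_has_vector_derivative[symmetric]
      using x by (auto intro!: derivative_eq_intros simp: field_simps)
  qed simp
  then show ?thesis
    using has_integral_open_interval[of _ _ 0 "1::real"] by auto
qed

lemma inv_sqrt_integrable: "(\<lambda>x::real. 1 / sqrt (1 - x)) integrable_on {0<..<1}"
  using inv_sqrt_has_integral by blast

lemma pic:
  fixes h :: "'p::metric_space \<Rightarrow> real \<Rightarrow> real"
  assumes c1: "\<And>p. p \<in> U \<Longrightarrow> continuous_on {0<..<1} (h p)"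
  and c2: "\<And>x. x \<in> {0<..<1} \<Longrightarrow> continuous_on U (\<lambda>p. h p x)"
  and dom: "\<And>p0. p0 \<in> U \<Longrightarrow> \<exists>e>0. \<exists>C. \<forall>p\<in>U. dist p p0 < e \<longrightarrow> (\<forall>x\<in>{0<..<1}. \<bar>h p x\<bar> \<le> C / sqrt (1-x))"
  shows pic_integrable: "\<And>p. p \<in> U \<Longrightarrow> h p integrable_on {0<..<1}"
    and pic_cont: "continuous_on U (\<lambda>p. integral {0<..<1} (h p))"
proof -
  have intC: "(\<lambda>x. C / sqrt (1 - x)) integrable_on {0<..<1}" for C :: real
    using integrable_on_cmult_left[OF inv_sqrt_integrable, of C] by simp
  show I: "h p integrable_on {0<..<1}" if p: "p \<in> U" for p
  proof -
    obtain e C where "e > 0" and b: "\<forall>q\<in>U. dist q p < e \<longrightarrow> (\<forall>x\<in>{0<..<1}. \<bar>h q x\<bar> \<le> C / sqrt (1-x))"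
      using dom[OF p] by blast
    show ?thesis
    proof (rule measurable_bounded_by_integrable_imp_integrable_real)
      show "h p \<in> borel_measurable (lebesgue_on {0<..<1})"
        by (rule continuous_imp_measurable_on_sets_lebesgue[OF c1[OF p]]) auto
      show "(\<lambda>x. C / sqrt (1 - x)) integrable_on {0<..<1}" by (rule intC)
      show "\<bar>h p x\<bar> \<le> C / sqrt (1 - x)" if "x \<in> {0<..<1}" for x
        using b p \<open>e > 0\<close> that by auto
    qed auto
  qed
  show "continuous_on U (\<lambda>p. integral {0<..<1} (h p))"
  proof (rule continuous_on_sequentiallyI)
    fix u p0 assume u: "\<forall>n. u n \<in> U" and p0: "p0 \<in> U" and lim: "u \<longlonglongrightarrow> p0"
    obtain e C where "e > 0" and b: "\<forall>q\<in>U. dist q p0 < e \<longrightarrow> (\<forall>x\<in>{0<..<1}. \<bar>h q x\<bar> \<le> C / sqrt (1-x))"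
      using dom[OF p0] by blast
    obtain N where N: "\<forall>n\<ge>N. dist (u n) p0 < e"
      using lim \<open>e > 0\<close> unfolding LIMSEQ_def by blast
    have "(\<lambda>k. integral {0<..<1} (h (u (k + N)))) \<longlonglongrightarrow> integral {0<..<1} (h p0)"
    proof (rule dominated_convergence(2))
      show "h (u (k + N)) integrable_on {0<..<1}" for k using I u by blast
      show "(\<lambda>x. C / sqrt (1 - x)) integrable_on {0<..<1}" by (rule intC)
      show "norm (h (u (k + N)) x) \<le> C / sqrt (1 - x)" if "x \<in> {0<..<1}" for k x
        using b u N that by auto
      show "(\<lambda>k. h (u (k + N)) x) \<longlonglongrightarrow> h p0 x" if x: "x \<in> {0<..<1}" for x
      proof -
        have "(\<lambda>k. h (u k) x) \<longlonglongrightarrow> h p0 x"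
          using c2[OF x] u p0 lim unfolding continuous_on_sequentially comp_def by blast
        then show ?thesis by (rule LIMSEQ_ignore_initial_segment)
      qed
    qed
    then show "(\<lambda>n. integral {0<..<1} (h (u n))) \<longlonglongrightarrow> integral {0<..<1} (h p0)"
      by (rule LIMSEQ_offset)
  qed
qed


context
  fixes a :: "real \<Rightarrow> real"
  assumes SR: "strongly_regular_scale_factor a"
begin

lemma a0: "a 0 = 0" and a_nonneg: "t \<ge> 0 \<Longrightarrow> a t \<ge> 0"
  and a_smono: "strict_mono_on {0..} a" and a_cont: "continuous_on {0..} a"
  and d1: "t > 0 \<Longrightarrow> (a has_real_derivative deriv a t) (at t)"
  and d2: "t > 0 \<Longrightarrow> (deriv a has_real_derivative deriv (deriv a) t) (at t)"
  and d2cont: "continuous_on {0<..} (deriv (deriv a))"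
  and d1nz: "t > 0 \<Longrightarrow> deriv a t \<noteq> 0"
  and Qup: "t > 0 \<Longrightarrow> a t * deriv (deriv a) t / (deriv a t)\<^sup>2 \<le> 1"
  using SR unfolding strongly_regular_scale_factor_def regular_scale_factor_def by auto

lemma K_ex: "\<exists>K\<ge>1. \<forall>t>0. a t * deriv (deriv a) t / (deriv a t)\<^sup>2 \<ge> - K"
  using SR unfolding strongly_regular_scale_factor_def by auto

lemma a_less: "0 \<le> x \<Longrightarrow> x < y \<Longrightarrow> a x < a y"
  using a_smono by (auto simp: strict_mono_on_def)

lemma a_le: "0 \<le> x \<Longrightarrow> x \<le> y \<Longrightarrow> a x \<le> a y"
  using a_less by (cases "x = y") (auto intro: less_imp_le)

lemma a_pos: "t > 0 \<Longrightarrow> a t > 0"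
  using a_less[of 0 t] a0 by simp

lemma d1_pos: assumes t: "t > 0" shows "deriv a t > 0"
proof (rule ccontr)
  assume "\<not> deriv a t > 0"
  with d1nz[OF t] have "deriv a t < 0" by simp
  from DERIV_neg_dec_right[OF d1[OF t] this] obtain d where "d > 0"
    and "\<forall>h>0. h < d \<longrightarrow> a t > a (t + h)" by blast
  then have "a t > a (t + d/2)" by auto
  moreover have "a t < a (t + d/2)" using a_less[of t "t + d/2"] t \<open>d > 0\<close> by simp
  ultimately show False by simp
qed

lemma isCont_a: "t > 0 \<Longrightarrow> isCont a t"
  using d1 DERIV_isCont by blast

lemma isCont_d1: "t > 0 \<Longrightarrow> isCont (deriv a) t"
  using d2 DERIV_isCont by blast

lemma isCont_d2: "t > 0 \<Longrightarrow> isCont (deriv (deriv a)) t"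
  using d2cont continuous_on_eq_continuous_at[of "{0<..}" "deriv (deriv a)"] by auto

lemma aext_cont: "continuous_on UNIV (aext a)"
proof -
  have "continuous_on UNIV (a \<circ> abs)"
    by (rule continuous_on_compose) (auto intro: continuous_intros continuous_on_subset[OF a_cont])
  then show ?thesis unfolding aext_def comp_def by (simp add: o_def)
qed

lemma aext_cont_intro: "continuous_on S g \<Longrightarrow> continuous_on S (\<lambda>x. aext a (g x))"
  using continuous_on_compose2[OF aext_cont, of S g] by auto

lemma d1_cont_intro: "continuous_on S g \<Longrightarrow> (\<And>x. x \<in> S \<Longrightarrow> g x > 0) \<Longrightarrow> continuous_on S (\<lambda>x. deriv a (g x))"
proof -
  assume g: "continuous_on S g" and p: "\<And>x. x \<in> S \<Longrightarrow> g x > 0"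
  have "continuous_on {0<..} (deriv a)"
    using isCont_d1 by (intro continuous_at_imp_continuous_on) auto
  then show ?thesis using continuous_on_compose2[OF _ g, of "{0<..}"] p by auto
qed

lemma d2_cont_intro: "continuous_on S g \<Longrightarrow> (\<And>x. x \<in> S \<Longrightarrow> g x > 0) \<Longrightarrow> continuous_on S (\<lambda>x. deriv (deriv a) (g x))"
  using continuous_on_compose2[OF d2cont, of S g] by auto

lemma a_cont_intro: "continuous_on S g \<Longrightarrow> (\<And>x. x \<in> S \<Longrightarrow> g x \<ge> 0) \<Longrightarrow> continuous_on S (\<lambda>x. a (g x))"
  using continuous_on_compose2[OF a_cont, of S g] by auto

lemma KL:
  assumes "0 < \<alpha>" "\<alpha> \<le> \<beta>"
  shows "\<exists>c>0. \<forall>\<tau>\<in>{\<alpha>..\<beta>}. \<forall>u\<in>{0..\<tau>}. c * (\<tau> - u) \<le> a \<tau> - a u"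
proof -
  have cd: "continuous_on {\<alpha>/2..\<beta>} (deriv a)"
    using isCont_d1 assms by (intro continuous_at_imp_continuous_on) auto
  obtain z where z: "z \<in> {\<alpha>/2..\<beta>}" and zmin: "\<forall>y\<in>{\<alpha>/2..\<beta>}. deriv a z \<le> deriv a y"
    using continuous_attains_inf[OF compact_Icc _ cd] assms by fastforce
  define m where "m = deriv a z"
  have m: "m > 0" unfolding m_def using z assms d1_pos by auto
  define c where "c = min m ((a \<alpha> - a (\<alpha>/2)) / \<beta>)"
  have c: "c > 0" unfolding c_def using m a_less[of "\<alpha>/2" \<alpha>] assms by auto
  show ?thesis
  proof (intro exI[of _ c] conjI c ballI)
    fix \<tau> u assume \<tau>: "\<tau> \<in> {\<alpha>..\<beta>}" and u: "u \<in> {0..\<tau>}"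
    show "c * (\<tau> - u) \<le> a \<tau> - a u"
    proof (cases "u < \<alpha>/2")
      case True
      have "a \<tau> - a u \<ge> a \<alpha> - a (\<alpha>/2)"
        using a_le[of \<alpha> \<tau>] a_le[of u "\<alpha>/2"] \<tau> u True assms by auto
      moreover have "c * (\<tau> - u) \<le> ((a \<alpha> - a (\<alpha>/2)) / \<beta>) * \<beta>"
      proof -
        have "c * (\<tau> - u) \<le> c * \<beta>" using c \<tau> u by (intro mult_left_mono) auto
        also have "\<dots> \<le> ((a \<alpha> - a (\<alpha>/2)) / \<beta>) * \<beta>"
          using assms by (intro mult_right_mono) (auto simp: c_def)
        finally show ?thesis .
      qed
      ultimately show ?thesis using assms by simp
    next
      case False
      show ?thesis
      proof (cases "u = \<tau>")
        case True then show ?thesis by simp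
      next
        case ne: False
        then have ut: "u < \<tau>" using u by auto
        have "\<And>x. u \<le> x \<Longrightarrow> x \<le> \<tau> \<Longrightarrow> (a has_real_derivative deriv a x) (at x)"
          using d1 False assms by auto
        from MVT2[OF ut this] obtain \<xi> where \<xi>: "u < \<xi>" "\<xi> < \<tau>"
          and eq: "a \<tau> - a u = (\<tau> - u) * deriv a \<xi>" by blast
        have "m \<le> deriv a \<xi>" using zmin \<xi> False \<tau> unfolding m_def by auto
        then have "c \<le> deriv a \<xi>" unfolding c_def by auto
        then show ?thesis using eq ut by (simp add: mult.commute mult_right_mono)
      qed
    qed
  qed
qed

end


lemma scale_back:
  fixes \<phi> :: "real \<Rightarrow> real"
  assumes st: "s < \<tau>" and h: "((\<lambda>x. (\<tau>-s) * \<phi> (s + (\<tau>-s)*x)) has_integral J) {0..1}"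
  shows "(\<phi> has_integral J) {s..\<tau>}"
proof -
  define m where "m = 1 / (\<tau> - s)"
  define c where "c = - s / (\<tau> - s)"
  have m: "m > 0" using st by (simp add: m_def)
  from has_integral_affinity'[OF h[unfolded cbox_interval[symmetric]] m, of c]
  have 1: "((\<lambda>y. (\<tau>-s) * \<phi> (s + (\<tau>-s) * (m * y + c))) has_integral J / m) (cbox ((0 - c) / m) ((1 - c) / m))"
    by (simp add: divide_inverse mult.commute)
  have tm: "(\<tau>-s) * m = 1" "(\<tau>-s) * c = - s" using st by (simp_all add: m_def c_def)
  have e1: "s + (\<tau>-s) * (m * y + c) = y" for y
  proof -
    have "(\<tau>-s) * (m * y + c) = ((\<tau>-s) * m) * y + (\<tau>-s) * c" by (simp add: algebra_simps)
    then show ?thesis using tm by simp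
  qed
  have e2: "(0 - c) / m = s" "(1 - c) / m = \<tau>" using st by (simp_all add: m_def c_def field_simps)
  from 1 have "((\<lambda>y. (\<tau>-s) * \<phi> y) has_integral J * (\<tau>-s)) {s..\<tau>}"
    unfolding e1 e2 by (simp add: m_def)
  from has_integral_mult_right[OF this, of "1/(\<tau>-s)"]
  show ?thesis using st by simp
qed

lemma bound_aux:
  fixes N Nm k w W z D :: real
  assumes "0 \<le> N" "N \<le> Nm" "0 < k" "0 < w" "w \<le> W" "0 < z" "k * w * z \<le> D"
  shows "w * (N / sqrt D) \<le> (Nm * sqrt W / sqrt k) / sqrt z"
proof -
  have kwz: "0 < k * w * z" using assms by simp
  have D: "0 < D" using kwz assms by linarith
  have "sqrt (k * w * z) \<le> sqrt D" using assms by simp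
  then have "w * (N / sqrt D) \<le> w * (N / sqrt (k * w * z))"
    using assms kwz D by (intro mult_left_mono divide_left_mono) (auto intro!: mult_pos_pos)
  also have "\<dots> = sqrt w * N / (sqrt k * sqrt z)"
    using assms by (simp add: real_sqrt_mult field_simps)
  also have "\<dots> \<le> sqrt W * Nm / (sqrt k * sqrt z)"
    using assms by (intro divide_right_mono mult_mono) auto
  finally show ?thesis by (simp add: field_simps)
qed


definition UR :: "(real \<times> real) set" where
  "UR = {p. fst p > 0 \<and> - fst p < snd p \<and> snd p < fst p}"

definition Gr :: "(real \<Rightarrow> real) \<Rightarrow> real \<times> real \<Rightarrow> real \<Rightarrow> real" where
  "Gr a p x = (fst p - snd p) * (aext a (snd p + (fst p - snd p) * x) /
      sqrt ((aext a (fst p))\<^sup>2 - (aext a (snd p + (fst p - snd p) * x))\<^sup>2))"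

lemma tau_abs_t:
  fixes \<tau> s t d \<gamma> :: real
  assumes "s < t" "t < \<tau>" "d \<le> \<tau> + s" "0 \<le> d" "0 < \<gamma>" "\<gamma> \<le> 1" "\<gamma> * (2 * \<tau>) \<le> d"
  shows "\<gamma> * (\<tau> - t) \<le> \<tau> - \<bar>t\<bar>"
proof (cases "t \<ge> 0")
  case True
  then show ?thesis using assms by (simp add: mult_le_cancel_right1)
next
  case False
  have "\<gamma> * (\<tau> - t) \<le> \<gamma> * (2 * \<tau>)" using assms False by (intro mult_left_mono) auto
  then show ?thesis using assms False by linarith
qed

lemma lin_between:
  fixes s \<tau> x :: real
  assumes "s < \<tau>" "0 < x" "x < 1"
  shows "s < s + (\<tau> - s) * x" "s + (\<tau> - s) * x < \<tau>"
proof -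
  have "0 < (\<tau> - s) * x" using assms by simp
  moreover have "(\<tau> - s) * x < (\<tau> - s) * 1" using assms by (intro mult_strict_left_mono) auto
  ultimately show "s < s + (\<tau> - s) * x" "s + (\<tau> - s) * x < \<tau>" by auto
qed

context
  fixes a :: "real \<Rightarrow> real"
  assumes SR: "strongly_regular_scale_factor a"
begin

lemma aext_pos_eq: "t \<ge> 0 \<Longrightarrow> aext a t = a t"
  by (simp add: aext_def)

lemma den_pos: "\<tau> > 0 \<Longrightarrow> \<bar>t\<bar> < \<tau> \<Longrightarrow> (aext a \<tau>)\<^sup>2 - (aext a t)\<^sup>2 > 0"
proof -
  assume "\<tau> > 0" "\<bar>t\<bar> < \<tau>"
  then have "a \<bar>t\<bar> < a \<tau>" "0 \<le> a \<bar>t\<bar>" using a_less[OF SR] a_nonneg[OF SR] by auto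
  then have "(a \<bar>t\<bar>)\<^sup>2 < (a \<tau>)\<^sup>2" by (simp add: power_strict_mono)
  then show ?thesis using \<open>\<tau> > 0\<close> by (simp add: aext_def)
qed

lemma UR_between:
  assumes p: "p \<in> UR" and x: "x \<in> {0<..<1}"
  shows "snd p < snd p + (fst p - snd p) * x" "snd p + (fst p - snd p) * x < fst p"
    "\<bar>snd p + (fst p - snd p) * x\<bar> < fst p"
proof -
  show 1: "snd p < snd p + (fst p - snd p) * x" "snd p + (fst p - snd p) * x < fst p"
    using p x lin_between[of "snd p" "fst p" x] by (auto simp: UR_def)
  then show "\<bar>snd p + (fst p - snd p) * x\<bar> < fst p" using p by (auto simp: UR_def abs_less_iff)
qed

lemma UR_den_pos:
  assumes p: "p \<in> UR" and x: "x \<in> {0<..<1}"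
  shows "(aext a (fst p))\<^sup>2 - (aext a (snd p + (fst p - snd p) * x))\<^sup>2 > 0"
  using den_pos[of "fst p" "snd p + (fst p - snd p) * x"] UR_between[OF p x] p by (auto simp: UR_def)

lemma Gr_cont1: "p \<in> UR \<Longrightarrow> continuous_on {0<..<1} (Gr a p)"
  unfolding Gr_def using UR_den_pos
  by (auto intro!: continuous_intros aext_cont_intro[OF SR] simp del: greaterThanLessThan_iff)
    (metis UR_den_pos less_irrefl fst_conv snd_conv diff_self)

lemma Gr_cont2: "x \<in> {0<..<1} \<Longrightarrow> continuous_on UR (\<lambda>p. Gr a p x)"
  unfolding Gr_def using UR_den_pos
  by (auto intro!: continuous_intros aext_cont_intro[OF SR] simp del: greaterThanLessThan_iff)
    (metis UR_den_pos less_irrefl fst_conv snd_conv diff_self)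

lemma Gr_dom:
  assumes p0: "p0 \<in> UR"
  shows "\<exists>e>0. \<exists>C. \<forall>p\<in>UR. dist p p0 < e \<longrightarrow> (\<forall>x\<in>{0<..<1}. \<bar>Gr a p x\<bar> \<le> C / sqrt (1-x))"
proof -
  define \<tau>0 where "\<tau>0 = fst p0"
  define \<delta> where "\<delta> = fst p0 + snd p0"
  have \<tau>0: "\<tau>0 > 0" and \<delta>: "\<delta> > 0" using p0 by (auto simp: UR_def \<tau>0_def \<delta>_def)
  define \<alpha> where "\<alpha> = \<tau>0 / 2"
  define \<beta> where "\<beta> = 2 * \<tau>0"
  have \<alpha>\<beta>: "0 < \<alpha>" "\<alpha> \<le> \<beta>" using \<tau>0 by (auto simp: \<alpha>_def \<beta>_def)
  obtain c where c: "c > 0" and cKL: "\<forall>\<tau>\<in>{\<alpha>..\<beta>}. \<forall>u\<in>{0..\<tau>}. c * (\<tau> - u) \<le> a \<tau> - a u"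
    using KL[OF SR \<alpha>\<beta>] by blast
  define \<gamma> where "\<gamma> = min 1 (\<delta> / (4 * \<beta>))"
  have \<gamma>: "0 < \<gamma>" "\<gamma> \<le> 1" "\<gamma> \<le> \<delta> / (4 * \<beta>)" using \<delta> \<alpha>\<beta> by (auto simp: \<gamma>_def)
  define k where "k = a \<alpha> * c * \<gamma>"
  have k: "k > 0" using a_pos[OF SR] \<alpha>\<beta> c \<gamma> by (simp add: k_def)
  define e where "e = min (\<tau>0 / 2) (\<delta> / 4)"
  have e: "e > 0" using \<tau>0 \<delta> by (simp add: e_def)
  show ?thesis
  proof (rule exI[of _ e], intro conjI e exI[of _ "a \<beta> * sqrt (2 * \<beta>) / sqrt k"] ballI impI)
    fix p and x :: real assume p: "p \<in> UR" and d: "dist p p0 < e" and x: "x \<in> {0<..<1}"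
    define \<tau> where "\<tau> = fst p"
    define s where "s = snd p"
    define t where "t = s + (\<tau> - s) * x"
    have "dist \<tau> \<tau>0 < e" "dist s (snd p0) < e"
      using d dist_fst_le[of p p0] dist_snd_le[of p p0] by (auto simp: \<tau>_def s_def \<tau>0_def)
    then have "\<tau>0 - e < \<tau>" "\<tau> < \<tau>0 + e" "snd p0 - e < s" "s < snd p0 + e"
      by (auto simp: dist_real_def abs_less_iff)
    moreover have "e \<le> \<tau>0 / 2" "e \<le> \<delta> / 4" by (auto simp: e_def)
    ultimately have \<tau>r: "\<alpha> < \<tau>" "\<tau> < \<beta>" and ts: "\<delta> / 2 \<le> \<tau> + s"
      using \<tau>0 \<alpha>_def \<beta>_def \<delta>_def \<tau>0_def by linarith+
    have t: "s < t" "t < \<tau>" "\<bar>t\<bar> < \<tau>" using UR_between[OF p x] by (auto simp: t_def s_def \<tau>_def)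
    have sp: "s < \<tau>" using t by simp
    have sm: "- \<tau> < s" using p by (simp add: UR_def \<tau>_def s_def)
    define D where "D = (aext a \<tau>)\<^sup>2 - (aext a t)\<^sup>2"
    have Gr_eq: "Gr a p x = (\<tau> - s) * (aext a t / sqrt D)"
      by (simp add: Gr_def D_def t_def \<tau>_def s_def)
    have N0: "0 \<le> aext a t" using a_nonneg[OF SR] by (simp add: aext_def)
    have N1: "aext a t \<le> a \<beta>" using a_le[OF SR, of "\<bar>t\<bar>" \<beta>] t \<tau>r by (simp add: aext_def)
    have kD: "k * (\<tau> - s) * (1 - x) \<le> D"
    proof -
      have "\<tau> - t = (\<tau> - s) * (1 - x)" by (simp add: t_def algebra_simps)
      have g2: "\<gamma> * (2 * \<tau>) \<le> \<delta> / 2"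
      proof -
        have "\<gamma> * (2 * \<tau>) \<le> (\<delta> / (4 * \<beta>)) * (2 * \<beta>)"
          using \<gamma> \<tau>r \<alpha>\<beta> by (intro mult_mono) auto
        also have "\<dots> = \<delta> / 2" using \<alpha>\<beta> by (simp add: field_simps)
        finally show ?thesis .
      qed
      have 1: "\<gamma> * (\<tau> - t) \<le> \<tau> - \<bar>t\<bar>"
        by (rule tau_abs_t[of s t \<tau> "\<delta>/2"]) (use t ts \<delta> \<gamma> g2 in auto)
      have 2: "c * (\<tau> - \<bar>t\<bar>) \<le> a \<tau> - a \<bar>t\<bar>" using cKL \<tau>r t by auto
      have at: "0 \<le> a \<bar>t\<bar>" "a \<bar>t\<bar> \<le> a \<tau>" "a \<alpha> \<le> a \<tau>" "0 < a \<alpha>"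
        using a_nonneg[OF SR] a_le[OF SR, of "\<bar>t\<bar>" \<tau>] a_le[OF SR, of \<alpha> \<tau>] a_pos[OF SR] t \<tau>r \<alpha>\<beta> by auto
      have "k * (\<tau> - s) * (1 - x) = a \<alpha> * (c * (\<gamma> * (\<tau> - t)))"
        unfolding \<open>\<tau> - t = (\<tau> - s) * (1 - x)\<close> by (simp add: k_def)
      also have "\<dots> \<le> a \<alpha> * (c * (\<tau> - \<bar>t\<bar>))"
        using 1 c at by (intro mult_left_mono) auto
      also have "\<dots> \<le> a \<alpha> * (a \<tau> - a \<bar>t\<bar>)"
        using 2 at by (intro mult_left_mono) auto
      also have "\<dots> \<le> a \<tau> * (a \<tau> - a \<bar>t\<bar>)"
        using at by (intro mult_right_mono) auto
      also have "\<dots> \<le> (a \<tau> + a \<bar>t\<bar>) * (a \<tau> - a \<bar>t\<bar>)"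
        using at by (intro mult_right_mono) auto
      also have "\<dots> = D" using \<tau>r \<alpha>\<beta> by (simp add: D_def aext_def power2_eq_square algebra_simps)
      finally show ?thesis .
    qed
    have "(\<tau> - s) * (aext a t / sqrt D) \<le> (a \<beta> * sqrt (2 * \<beta>) / sqrt k) / sqrt (1 - x)"
      by (rule bound_aux) (use N0 N1 k sp sm \<tau>r t x kD in auto)
    moreover have "0 \<le> (\<tau> - s) * (aext a t / sqrt D)"
      using N0 sp den_pos[of \<tau> t] t \<tau>r \<alpha>\<beta> by (simp add: D_def)
    ultimately show "\<bar>Gr a p x\<bar> \<le> a \<beta> * sqrt (2 * \<beta>) / sqrt k / sqrt (1 - x)"
      unfolding Gr_eq by simp
  qed
qed

end


definition phi :: "(real \<Rightarrow> real) \<Rightarrow> real \<Rightarrow> real \<Rightarrow> real" where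
  "phi a \<tau> t = aext a t / sqrt ((aext a \<tau>)\<^sup>2 - (aext a t)\<^sup>2)"

context
  fixes a :: "real \<Rightarrow> real"
  assumes SR: "strongly_regular_scale_factor a"
begin

lemma rho_int_phi: "rho_int a \<tau> s = integral {s..\<tau>} (phi a \<tau>)"
  by (simp add: rho_int_def phi_def[abs_def])

lemma Gr_phi: "Gr a p = (\<lambda>x. (fst p - snd p) * phi a (fst p) (snd p + (fst p - snd p) * x))"
  by (simp add: Gr_def phi_def fun_eq_iff)

lemma Gr_integrable: "p \<in> UR \<Longrightarrow> Gr a p integrable_on {0<..<1}"
  using pic_integrable[of UR "Gr a", OF Gr_cont1[OF SR] Gr_cont2[OF SR] Gr_dom[OF SR]] by blast

lemma R_has_integral:
  assumes p: "p \<in> UR"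
  shows "(phi a (fst p) has_integral integral {0<..<1} (Gr a p)) {snd p..fst p}"
proof -
  have "(Gr a p has_integral integral {0<..<1} (Gr a p)) {0<..<1}"
    using Gr_integrable[OF p] by (simp add: integrable_integral)
  then have "(Gr a p has_integral integral {0<..<1} (Gr a p)) {0..1}"
    using has_integral_open_interval[of _ _ 0 "1::real"] by auto
  then show ?thesis
    using scale_back[of "snd p" "fst p" "phi a (fst p)" "integral {0<..<1} (Gr a p)"] p
    by (simp add: UR_def Gr_phi)
qed

lemma R_eq: "p \<in> UR \<Longrightarrow> rho_int a (fst p) (snd p) = integral {0<..<1} (Gr a p)"
  using R_has_integral unfolding rho_int_phi by (rule integral_unique)

lemma phi_integrable: "\<tau> > 0 \<Longrightarrow> - \<tau> < s \<Longrightarrow> s < \<tau> \<Longrightarrow> phi a \<tau> integrable_on {s..\<tau>}"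
  using R_has_integral[of "(\<tau>, s)"] by (auto simp: UR_def)

lemma R_cont: "continuous_on UR (\<lambda>p. rho_int a (fst p) (snd p))"
proof -
  have "continuous_on UR (\<lambda>p. integral {0<..<1} (Gr a p))"
    using pic_cont[of UR "Gr a", OF Gr_cont1[OF SR] Gr_cont2[OF SR] Gr_dom[OF SR]] by blast
  then show ?thesis using R_eq by (simp cong: continuous_on_cong)
qed

lemma R_cont_s:
  assumes "\<tau> > 0" "- \<tau> < c" "d < \<tau>"
  shows "continuous_on {c..d} (\<lambda>s. rho_int a \<tau> s)"
proof -
  have "continuous_on {c..d} ((\<lambda>p. rho_int a (fst p) (snd p)) \<circ> (\<lambda>s. (\<tau>, s)))"
    by (rule continuous_on_compose[OF _ continuous_on_subset[OF R_cont]])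
       (use assms in \<open>auto intro!: continuous_intros simp: UR_def\<close>)
  then show ?thesis by (simp add: comp_def)
qed

lemma R_small:
  assumes \<tau>: "\<tau> > 0"
  shows "\<exists>M. \<forall>s. 0 \<le> s \<and> s < \<tau> \<longrightarrow> rho_int a \<tau> s \<le> M * sqrt (\<tau> - s)"
proof -
  obtain c where c: "c > 0" and cKL: "\<forall>\<tau>'\<in>{\<tau>..\<tau>}. \<forall>u\<in>{0..\<tau>'}. c * (\<tau>' - u) \<le> a \<tau>' - a u"
    using KL[OF SR \<tau>, of \<tau>] by auto
  define k where "k = a \<tau> * c"
  have aT: "a \<tau> > 0" using a_pos[OF SR \<tau>] .
  have k: "k > 0" using aT c by (simp add: k_def)
  define M0 where "M0 = a \<tau> / sqrt k"
  show ?thesis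
  proof (intro exI[of _ "M0 * 2"] allI impI)
    fix s assume s: "0 \<le> s \<and> s < \<tau>"
    define p where "p = (\<tau>, s)"
    have p: "p \<in> UR" using s \<tau> by (auto simp: p_def UR_def)
    have bnd: "Gr a p x \<le> (M0 * sqrt (\<tau> - s)) * (1 / sqrt (1 - x))" if x: "x \<in> {0<..<1}" for x
    proof -
      define t where "t = s + (\<tau> - s) * x"
      have t: "s < t" "t < \<tau>" using lin_between[of s \<tau> x] s x by (auto simp: t_def)
      define D where "D = (aext a \<tau>)\<^sup>2 - (aext a t)\<^sup>2"
      have Gr_eq: "Gr a p x = (\<tau> - s) * (aext a t / sqrt D)"
        by (simp add: Gr_def D_def t_def p_def)
      have at: "aext a t = a t" "aext a \<tau> = a \<tau>" using t s \<tau> by (auto simp: aext_def)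
      have at2: "0 \<le> a t" "a t \<le> a \<tau>" using a_nonneg[OF SR] a_le[OF SR, of t \<tau>] t s by auto
      have kD: "k * (\<tau> - s) * (1 - x) \<le> D"
      proof -
        have "k * (\<tau> - s) * (1 - x) = a \<tau> * (c * (\<tau> - t))" by (simp add: k_def t_def algebra_simps)
        also have "\<dots> \<le> a \<tau> * (a \<tau> - a t)" using cKL t s aT by (intro mult_left_mono) auto
        also have "\<dots> \<le> (a \<tau> + a t) * (a \<tau> - a t)" using at2 by (intro mult_right_mono) auto
        also have "\<dots> = D" by (simp add: D_def at power2_eq_square algebra_simps)
        finally show ?thesis .
      qed
      have "(\<tau> - s) * (aext a t / sqrt D) \<le> (a \<tau> * sqrt (\<tau> - s) / sqrt k) / sqrt (1 - x)"
        by (rule bound_aux) (use at at2 k s x t kD in auto)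
      then show ?thesis unfolding Gr_eq by (simp add: M0_def)
    qed
    have h1: "(Gr a p has_integral rho_int a \<tau> s) {0<..<1}"
      using Gr_integrable[OF p] R_eq[OF p] by (simp add: p_def integrable_integral)
    have h2: "((\<lambda>x. (M0 * sqrt (\<tau> - s)) * (1 / sqrt (1 - x))) has_integral (M0 * sqrt (\<tau> - s)) * 2) {0<..<1}"
      by (rule has_integral_mult_right[OF inv_sqrt_has_integral])
    have "rho_int a \<tau> s \<le> (M0 * sqrt (\<tau> - s)) * 2"
      by (rule has_integral_le[OF h1 h2]) (use bnd in auto)
    then show "rho_int a \<tau> s \<le> M0 * 2 * sqrt (\<tau> - s)" by (simp add: algebra_simps)
  qed
qed

lemma E1:
  assumes \<tau>: "\<tau> > 0" and \<rho>: "0 < \<rho>" "\<rho> \<le> rho_int a \<tau> 0"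
  shows "\<exists>s. 0 \<le> s \<and> s < \<tau> \<and> rho_int a \<tau> s = \<rho>"
proof -
  obtain M where M: "\<forall>s. 0 \<le> s \<and> s < \<tau> \<longrightarrow> rho_int a \<tau> s \<le> M * sqrt (\<tau> - s)"
    using R_small[OF \<tau>] by blast
  define M1 where "M1 = max M 0 + 1"
  have M1: "M1 > 0" "M \<le> M1" by (auto simp: M1_def)
  define \<eta> where "\<eta> = min (\<tau>/2) ((\<rho> / (2 * M1))\<^sup>2)"
  have \<eta>: "0 < \<eta>" "\<eta> \<le> \<tau>/2" "\<eta> \<le> (\<rho> / (2 * M1))\<^sup>2" using \<tau> \<rho> M1 by (auto simp: \<eta>_def)
  define s1 where "s1 = \<tau> - \<eta>"
  have s1: "0 \<le> s1" "s1 < \<tau>" using \<eta> by (auto simp: s1_def)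
  have "sqrt \<eta> \<le> sqrt ((\<rho> / (2 * M1))\<^sup>2)" using \<eta> by (simp only: real_sqrt_le_iff)
  also have "\<dots> = \<rho> / (2 * M1)" using \<rho> M1 by (simp only: real_sqrt_abs) simp
  finally have sq: "sqrt \<eta> \<le> \<rho> / (2 * M1)" .
  have "rho_int a \<tau> s1 \<le> M * sqrt \<eta>" using M[rule_format, of s1] s1 by (simp add: s1_def)
  also have "\<dots> \<le> M1 * sqrt \<eta>" using M1 \<eta> by (intro mult_right_mono) auto
  also have "\<dots> \<le> M1 * (\<rho> / (2 * M1))" using M1 sq by (intro mult_left_mono) auto
  also have "\<dots> = \<rho> / 2" using M1 by simp
  finally have "rho_int a \<tau> s1 \<le> \<rho>" using \<rho> by simp
  from IVT2'[of "\<lambda>s. rho_int a \<tau> s", OF this \<rho>(2) s1(1) R_cont_s[OF \<tau>]]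
  obtain s where "0 \<le> s" "s \<le> s1" "rho_int a \<tau> s = \<rho>" using \<tau> s1 by auto
  then show ?thesis using s1 by auto
qed

lemma phi_cont: "\<tau> > 0 \<Longrightarrow> - \<tau> < c \<Longrightarrow> d < \<tau> \<Longrightarrow> continuous_on {c..d} (phi a \<tau>)"
  unfolding phi_def
proof (intro continuous_intros aext_cont_intro[OF SR] ballI)
  fix t assume "\<tau> > 0" "- \<tau> < c" "d < \<tau>" "t \<in> {c..d}"
  then have "(aext a \<tau>)\<^sup>2 - (aext a t)\<^sup>2 > 0" using den_pos[OF SR, of \<tau> t] by auto
  then show "sqrt ((aext a \<tau>)\<^sup>2 - (aext a t)\<^sup>2) \<noteq> 0" by simp
qed

lemma phi_pos: "\<tau> > 0 \<Longrightarrow> \<bar>t\<bar> < \<tau> \<Longrightarrow> t \<noteq> 0 \<Longrightarrow> phi a \<tau> t > 0"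
  unfolding phi_def using den_pos[OF SR, of \<tau> t] a_pos[OF SR, of "\<bar>t\<bar>"] by (simp add: aext_def)

lemma phi_nonneg: "\<tau> > 0 \<Longrightarrow> \<bar>t\<bar> < \<tau> \<Longrightarrow> phi a \<tau> t \<ge> 0"
  unfolding phi_def using den_pos[OF SR, of \<tau> t] a_nonneg[OF SR, of "\<bar>t\<bar>"] by (simp add: aext_def)

lemma R_strict:
  assumes \<tau>: "\<tau> > 0" and s: "- \<tau> < s1" "s1 < s2" "s2 < \<tau>"
  shows "rho_int a \<tau> s2 < rho_int a \<tau> s1"
proof -
  have int: "phi a \<tau> integrable_on {s1..\<tau>}" using phi_integrable[OF \<tau>] s by auto
  have comb: "integral {s1..s2} (phi a \<tau>) + integral {s2..\<tau>} (phi a \<tau>) = integral {s1..\<tau>} (phi a \<tau>)"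
    using Henstock_Kurzweil_Integration.integral_combine[OF _ _ int, of s2] s by auto
  have cont: "continuous_on {s1..s2} (phi a \<tau>)" using phi_cont[OF \<tau>] s by auto
  have nn: "\<And>x. x \<in> {s1..s2} \<Longrightarrow> phi a \<tau> x \<ge> 0" using phi_nonneg[OF \<tau>] s by auto
  have "\<exists>x\<in>{s1..s2}. phi a \<tau> x \<noteq> 0"
  proof (cases "s1 = 0")
    case True
    then show ?thesis using phi_pos[OF \<tau>, of s2] s by (intro bexI[of _ s2]) auto
  next
    case False
    then show ?thesis using phi_pos[OF \<tau>, of s1] s by (intro bexI[of _ s1]) (auto simp: abs_less_iff)
  qed
  then have "integral {s1..s2} (phi a \<tau>) \<noteq> 0"
    using integral_eq_0_iff[OF cont _ nn] s by auto
  moreover have "integral {s1..s2} (phi a \<tau>) \<ge> 0"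
    using integral_nonneg[OF integrable_continuous_interval[OF cont] nn] by auto
  ultimately show ?thesis using comb by (simp add: rho_int_phi)
qed

lemma phi_even: "phi a \<tau> (- t) = phi a \<tau> t"
  by (simp add: phi_def aext_def)

lemma R_reflect:
  assumes \<tau>: "\<tau> > 0" and s: "- \<tau> < s" "s < 0"
  shows "rho_int a \<tau> s = 2 * rho_int a \<tau> 0 - rho_int a \<tau> (- s)"
proof -
  have int: "phi a \<tau> integrable_on {s..\<tau>}" using phi_integrable[OF \<tau>] s by auto
  have int0: "phi a \<tau> integrable_on {0..\<tau>}" using phi_integrable[OF \<tau>] \<tau> by auto
  have c1: "integral {s..0} (phi a \<tau>) + integral {0..\<tau>} (phi a \<tau>) = integral {s..\<tau>} (phi a \<tau>)"
    using Henstock_Kurzweil_Integration.integral_combine[OF _ _ int, of 0] s \<tau> by auto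
  have c2: "integral {0..-s} (phi a \<tau>) + integral {-s..\<tau>} (phi a \<tau>) = integral {0..\<tau>} (phi a \<tau>)"
    using Henstock_Kurzweil_Integration.integral_combine[OF _ _ int0, of "-s"] s \<tau> by auto
  have "integral {s..0} (phi a \<tau>) = integral {-0..-s} (\<lambda>x. phi a \<tau> (- x))"
    using Henstock_Kurzweil_Integration.integral_reflect_real[of 0 s "phi a \<tau>"] by simp
  also have "\<dots> = integral {0..-s} (phi a \<tau>)" by (simp add: phi_even)
  finally have r: "integral {s..0} (phi a \<tau>) = integral {0..-s} (phi a \<tau>)" .
  show ?thesis using c1 c2 r by (simp add: rho_int_phi)
qed

lemma R_exists:
  assumes \<tau>: "\<tau> > 0" and \<rho>: "0 < \<rho>" "\<rho> < 2 * rho_int a \<tau> 0"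
  shows "\<exists>s. - \<tau> < s \<and> s < \<tau> \<and> rho_int a \<tau> s = \<rho>"
proof (cases "\<rho> \<le> rho_int a \<tau> 0")
  case True
  then obtain s where "0 \<le> s" "s < \<tau>" "rho_int a \<tau> s = \<rho>" using E1[OF \<tau> \<rho>(1)] by blast
  then show ?thesis using \<tau> by (intro exI[of _ s]) auto
next
  case False
  define \<rho>' where "\<rho>' = 2 * rho_int a \<tau> 0 - \<rho>"
  have "0 < \<rho>'" "\<rho>' \<le> rho_int a \<tau> 0" using False \<rho> by (auto simp: \<rho>'_def)
  from E1[OF \<tau> this] obtain s' where s': "0 \<le> s'" "s' < \<tau>" "rho_int a \<tau> s' = \<rho>'" by blast
  have "s' \<noteq> 0" using s' False by (auto simp: \<rho>'_def)
  then have "rho_int a \<tau> (- s') = \<rho>"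
    using R_reflect[OF \<tau>, of "-s'"] s' by (simp add: \<rho>'_def)
  then show ?thesis using s' \<open>s' \<noteq> 0\<close> by (intro exI[of _ "-s'"]) auto
qed

lemma t0_prop:
  assumes "(\<tau>, \<rho>) \<in> domD a"
  shows "- \<tau> < t0 a \<tau> \<rho>" "t0 a \<tau> \<rho> < \<tau>" "rho_int a \<tau> (t0 a \<tau> \<rho>) = \<rho>"
proof -
  have \<tau>: "\<tau> > 0" and \<rho>: "0 < \<rho>" "\<rho> < 2 * rho_int a \<tau> 0"
    using assms by (auto simp: domD_def rho_M_def)
  obtain s where s: "- \<tau> < s" "s < \<tau>" "rho_int a \<tau> s = \<rho>" using R_exists[OF \<tau> \<rho>] by blast
  have uniq: "\<exists>!s. s \<in> {-\<tau><..<\<tau>} \<and> \<rho> = rho_int a \<tau> s"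
  proof (rule ex1I[of _ s])
    show "s \<in> {-\<tau><..<\<tau>} \<and> \<rho> = rho_int a \<tau> s" using s by auto
    fix s'' assume h: "s'' \<in> {-\<tau><..<\<tau>} \<and> \<rho> = rho_int a \<tau> s''"
    show "s'' = s"
    proof (rule ccontr)
      assume "s'' \<noteq> s"
      then consider "s'' < s" | "s < s''" by linarith
      then show False
        using R_strict[OF \<tau>, of s'' s] R_strict[OF \<tau>, of s s''] h s by cases auto
    qed
  qed
  have "t0 a \<tau> \<rho> \<in> {-\<tau><..<\<tau>} \<and> \<rho> = rho_int a \<tau> (t0 a \<tau> \<rho>)"
    unfolding t0_def by (rule theI'[OF uniq])
  then show "- \<tau> < t0 a \<tau> \<rho>" "t0 a \<tau> \<rho> < \<tau>" "rho_int a \<tau> (t0 a \<tau> \<rho>) = \<rho>" by auto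
qed

end

context
  fixes a :: "real \<Rightarrow> real"
  assumes SR: "strongly_regular_scale_factor a"
begin

lemma dist_pair_fst: "dist (x::real, y::real) (x', y) = \<bar>x - x'\<bar>"
  by (simp add: dist_Pair_Pair dist_real_def)

lemma t0_cont: "continuous_on (domD a) (\<lambda>q. t0 a (fst q) (snd q))"
  unfolding continuous_on_iff
proof (intro ballI allI impI)
  fix q0 :: "real \<times> real" and e :: real
  assume q0: "q0 \<in> domD a" and e: "e > 0"
  define \<tau>0 where "\<tau>0 = fst q0"
  define \<rho>0 where "\<rho>0 = snd q0"
  have q0': "(\<tau>0, \<rho>0) \<in> domD a" using q0 by (simp add: \<tau>0_def \<rho>0_def)
  have \<tau>0: "\<tau>0 > 0" using q0' by (simp add: domD_def)
  define s0 where "s0 = t0 a \<tau>0 \<rho>0"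
  have s0: "- \<tau>0 < s0" "s0 < \<tau>0" "rho_int a \<tau>0 s0 = \<rho>0"
    using t0_prop[OF SR q0'] by (auto simp: s0_def)
  define \<epsilon> where "\<epsilon> = min (e/2) ((\<tau>0 - \<bar>s0\<bar>)/2)"
  have e1: "\<epsilon> \<le> (\<tau>0 - \<bar>s0\<bar>)/2" unfolding \<epsilon>_def by (rule min.cobounded2)
  have e2: "\<epsilon> \<le> e/2" unfolding \<epsilon>_def by (rule min.cobounded1)
  have e3: "\<bar>s0\<bar> < \<tau>0" using s0 by (auto simp: abs_less_iff)
  have \<epsilon>: "\<epsilon> > 0" "\<epsilon> < e" "\<bar>s0\<bar> + \<epsilon> < \<tau>0"
    using e e1 e2 e3 by (auto simp: \<epsilon>_def)
  define sL where "sL = s0 - \<epsilon>"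
  define sU where "sU = s0 + \<epsilon>"
  define m where "m = \<tau>0 - (\<bar>s0\<bar> + \<epsilon>)"
  have m: "m > 0" using \<epsilon> by (simp add: m_def)
  have sLU: "\<bar>sL\<bar> \<le> \<tau>0 - m" "\<bar>sU\<bar> \<le> \<tau>0 - m" using \<epsilon> by (auto simp: sL_def sU_def m_def abs_le_iff)
  have RL: "rho_int a \<tau>0 sL > \<rho>0"
    using R_strict[OF SR \<tau>0, of sL s0] s0 sLU m \<epsilon> by (auto simp: sL_def)
  have RU: "rho_int a \<tau>0 sU < \<rho>0"
    using R_strict[OF SR \<tau>0, of s0 sU] s0 sLU m \<epsilon> by (auto simp: sU_def)
  define g where "g = min (rho_int a \<tau>0 sL - \<rho>0) (\<rho>0 - rho_int a \<tau>0 sU)"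
  have g: "g > 0" using RL RU by (simp add: g_def)
  have gL: "g \<le> rho_int a \<tau>0 sL - \<rho>0" and gU: "g \<le> \<rho>0 - rho_int a \<tau>0 sU"
    unfolding g_def by (rule min.cobounded1, rule min.cobounded2)
  have pL: "(\<tau>0, sL) \<in> UR" and pU: "(\<tau>0, sU) \<in> UR" using sLU m \<tau>0 by (auto simp: UR_def abs_le_iff)
  obtain dL where dL: "dL > 0" and hL: "\<forall>p'\<in>UR. dist p' (\<tau>0, sL) < dL \<longrightarrow>
      dist (rho_int a (fst p') (snd p')) (rho_int a \<tau>0 sL) < g/2"
    using R_cont[OF SR, unfolded continuous_on_iff] pL g by (metis half_gt_zero fst_conv snd_conv)
  obtain dU where dU: "dU > 0" and hU: "\<forall>p'\<in>UR. dist p' (\<tau>0, sU) < dU \<longrightarrow>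
      dist (rho_int a (fst p') (snd p')) (rho_int a \<tau>0 sU) < g/2"
    using R_cont[OF SR, unfolded continuous_on_iff] pU g by (metis half_gt_zero fst_conv snd_conv)
  define d where "d = min (min dL dU) (min m (g/2))"
  have d: "d > 0" using dL dU m g by (simp add: d_def)
  show "\<exists>d>0. \<forall>q\<in>domD a. dist q q0 < d \<longrightarrow> dist (t0 a (fst q) (snd q)) (t0 a (fst q0) (snd q0)) < e"
  proof (rule exI[of _ d], intro conjI d ballI impI)
    fix q assume q: "q \<in> domD a" and dq: "dist q q0 < d"
    define \<tau> where "\<tau> = fst q"
    define \<rho> where "\<rho> = snd q"
    have q': "(\<tau>, \<rho>) \<in> domD a" using q by (simp add: \<tau>_def \<rho>_def)
    have "\<bar>\<tau> - \<tau>0\<bar> < d" "\<bar>\<rho> - \<rho>0\<bar> < d"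
      using dq dist_fst_le[of q q0] dist_snd_le[of q q0]
      by (auto simp: \<tau>_def \<rho>_def \<tau>0_def \<rho>0_def dist_real_def)
    then have dd: "\<bar>\<tau> - \<tau>0\<bar> < dL" "\<bar>\<tau> - \<tau>0\<bar> < dU" "\<bar>\<tau> - \<tau>0\<bar> < m" "\<bar>\<rho> - \<rho>0\<bar> < g/2"
      by (auto simp: d_def)
    have pL': "(\<tau>, sL) \<in> UR" and pU': "(\<tau>, sU) \<in> UR"
      using sLU dd(3) m \<tau>0 by (auto simp: UR_def abs_le_iff abs_less_iff)
    have "dist (rho_int a \<tau> sL) (rho_int a \<tau>0 sL) < g/2"
      using hL pL' dd(1) by (auto simp: dist_pair_fst)
    then have RL': "rho_int a \<tau> sL > \<rho>"
      using dd(4) gL unfolding dist_real_def abs_less_iff by linarith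
    have "dist (rho_int a \<tau> sU) (rho_int a \<tau>0 sU) < g/2"
      using hU pU' dd(2) by (auto simp: dist_pair_fst)
    then have RU': "rho_int a \<tau> sU < \<rho>"
      using dd(4) gU unfolding dist_real_def abs_less_iff by linarith
    define s where "s = t0 a \<tau> \<rho>"
    have s: "- \<tau> < s" "s < \<tau>" "rho_int a \<tau> s = \<rho>" using t0_prop[OF SR q'] by (auto simp: s_def)
    have \<tau>pos: "\<tau> > 0" using q' by (simp add: domD_def)
    have "sL < s"
    proof (rule ccontr)
      assume "\<not> sL < s"
      then consider "s = sL" | "s < sL" by linarith
      then show False
      proof cases
        case 1 then show False using s RL' by simp
      next
        case 2 then show False using R_strict[OF SR \<tau>pos, of s sL] s RL' pL' by (auto simp: UR_def)
      qed
    qed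
    moreover have "s < sU"
    proof (rule ccontr)
      assume "\<not> s < sU"
      then consider "s = sU" | "sU < s" by linarith
      then show False
      proof cases
        case 1 then show False using s RU' by simp
      next
        case 2 then show False using R_strict[OF SR \<tau>pos, of sU s] s RU' pU' by (auto simp: UR_def)
      qed
    qed
    ultimately have "\<bar>s - s0\<bar> < e" using \<epsilon> by (auto simp: sL_def sU_def abs_less_iff)
    then show "dist (t0 a (fst q) (snd q)) (t0 a (fst q0) (snd q0)) < e"
      by (simp add: s_def s0_def \<tau>_def \<rho>_def \<tau>0_def \<rho>0_def dist_real_def)
  qed
qed

end


lemma sqrt_ratio_le:
  fixes P Q :: real
  assumes "0 < Q" "Q \<le> P"
  shows "sqrt P / sqrt Q - 1 \<le> (P - Q) / Q"
proof -
  have r: "P / Q \<ge> 1" using assms by simp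
  have "sqrt P / sqrt Q = sqrt (P / Q)" by (simp add: real_sqrt_divide)
  also have "\<dots> \<le> P / Q"
  proof -
    have "sqrt (P/Q) * 1 \<le> sqrt (P/Q) * sqrt (P/Q)" using r by (intro mult_left_mono) auto
    then show ?thesis using r by simp
  qed
  finally show ?thesis using assms by (simp add: diff_divide_distrib)
qed

lemma case1:
  fixes y ys T q K :: real
  assumes "0 < y" "0 \<le> ys" "ys \<le> y" "y \<le> T" "y\<^sup>2 \<le> T\<^sup>2 / 2" "\<bar>q\<bar> \<le> K / y" "0 \<le> K"
  shows "\<bar>q\<bar> * (sqrt (T\<^sup>2 - ys\<^sup>2) / sqrt (T\<^sup>2 - y\<^sup>2) - 1) \<le> 2 * K / T"
proof -
  have T: "T > 0" using assms by simp
  define Q where "Q = T\<^sup>2 - y\<^sup>2"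
  define P where "P = T\<^sup>2 - ys\<^sup>2"
  have Q: "Q \<ge> T\<^sup>2 / 2" using assms by (simp add: Q_def)
  have "T\<^sup>2 > 0" using T by simp
  then have Qp: "Q > 0" using Q by linarith
  have QP: "Q \<le> P" using assms by (simp add: Q_def P_def power_mono)
  have "sqrt P / sqrt Q - 1 \<le> (P - Q) / Q" by (rule sqrt_ratio_le[OF Qp QP])
  also have "\<dots> \<le> y\<^sup>2 / Q" using Qp assms by (intro divide_right_mono) (auto simp: P_def Q_def)
  also have "\<dots> \<le> y\<^sup>2 / (T\<^sup>2 / 2)" using Q T Qp by (intro divide_left_mono) auto
  finally have \<phi>: "sqrt P / sqrt Q - 1 \<le> 2 * y\<^sup>2 / T\<^sup>2" by (simp add: mult.commute)
  have \<phi>0: "0 \<le> sqrt P / sqrt Q - 1" using QP Qp by (simp add: real_sqrt_le_mono)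
  have "\<bar>q\<bar> * (sqrt P / sqrt Q - 1) \<le> (K / y) * (2 * y\<^sup>2 / T\<^sup>2)"
    using assms \<phi> \<phi>0 by (intro mult_mono) auto
  also have "\<dots> = 2 * K * y / T\<^sup>2" using assms(1) by (simp add: power2_eq_square)
  also have "\<dots> \<le> 2 * K * T / T\<^sup>2" using assms T by (intro divide_right_mono mult_left_mono) auto
  also have "\<dots> = 2 * K / T" using T by (simp add: power2_eq_square)
  finally show ?thesis by (simp add: P_def Q_def)
qed

lemma case2:
  fixes y ys T q K :: real
  assumes "0 < y" "0 \<le> ys" "ys \<le> y" "y < T" "y\<^sup>2 > T\<^sup>2 / 2" "\<bar>q\<bar> \<le> K / y" "0 \<le> K"
  shows "\<bar>q\<bar> * (sqrt (T\<^sup>2 - ys\<^sup>2) / sqrt (T\<^sup>2 - y\<^sup>2) - 1) \<le> sqrt 2 * K / sqrt (T\<^sup>2 - y\<^sup>2)"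
proof -
  have T: "T > 0" using assms by simp
  define Q where "Q = T\<^sup>2 - y\<^sup>2"
  define P where "P = T\<^sup>2 - ys\<^sup>2"
  have "y\<^sup>2 < T\<^sup>2" using assms by (intro power_strict_mono) auto
  then have Qp: "Q > 0" by (simp add: Q_def)
  have "ys\<^sup>2 \<le> y\<^sup>2" using assms by (intro power_mono) auto
  then have QP: "Q \<le> P" by (simp add: Q_def P_def)
  have PT: "P \<le> T\<^sup>2" by (simp add: P_def)
  have \<phi>: "sqrt P / sqrt Q - 1 \<le> T / sqrt Q"
  proof -
    have "sqrt P \<le> sqrt (T\<^sup>2)" using real_sqrt_le_mono[OF PT] .
    then have "sqrt P \<le> T" using T by simp
    then have "sqrt P / sqrt Q \<le> T / sqrt Q" using Qp by (intro divide_right_mono) auto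
    then show ?thesis by simp
  qed
  have "sqrt Q \<le> sqrt P" using QP by simp
  then have "1 \<le> sqrt P / sqrt Q" using Qp by (simp add: le_divide_eq_1)
  then have \<phi>0: "0 \<le> sqrt P / sqrt Q - 1" by simp
  have "(sqrt 2 * y)\<^sup>2 = 2 * y\<^sup>2" by (simp add: power_mult_distrib)
  then have "(sqrt 2 * y)\<^sup>2 > T\<^sup>2" using assms(5) by linarith
  then have sy: "sqrt 2 * y > T" by (rule power_less_imp_less_base) (use assms(1) in simp)
  have Ky: "K / y \<le> sqrt 2 * K / T"
  proof -
    have "K / y = sqrt 2 * K / (sqrt 2 * y)" by simp
    also have "\<dots> \<le> sqrt 2 * K / T"
      by (rule divide_left_mono) (use sy T assms(7) in auto)
    finally show ?thesis .
  qed
  have q2: "\<bar>q\<bar> \<le> sqrt 2 * K / T" using assms(6) Ky by linarith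
  have "\<bar>q\<bar> * (sqrt P / sqrt Q - 1) \<le> (sqrt 2 * K / T) * (T / sqrt Q)"
    by (rule mult_mono[OF q2 \<phi>]) (use \<phi>0 T assms(7) in auto)
  also have "\<dots> = sqrt 2 * K / sqrt Q" using T by simp
  finally show ?thesis by (simp add: P_def Q_def)
qed

definition psi :: "(real \<Rightarrow> real) \<Rightarrow> real \<Rightarrow> real \<Rightarrow> real \<Rightarrow> real" where
  "psi a \<tau> s t = deriv (deriv a) t / (deriv a t)\<^sup>2 *
           (sqrt ((a \<tau>)\<^sup>2 - (a s)\<^sup>2) / sqrt ((a \<tau>)\<^sup>2 - (a t)\<^sup>2) - 1)"

definition UF :: "(real \<times> real) set" where
  "UF = {p. fst p > 0 \<and> 0 \<le> snd p \<and> snd p < fst p}"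

definition Hs :: "(real \<Rightarrow> real) \<Rightarrow> real \<times> real \<Rightarrow> real \<Rightarrow> real" where
  "Hs a p x = (fst p - snd p) * psi a (fst p) (snd p) (snd p + (fst p - snd p) * x)"

lemma UF_between:
  assumes p: "p \<in> UF" and x: "x \<in> {0<..<1}"
  shows "snd p < snd p + (fst p - snd p) * x" "snd p + (fst p - snd p) * x < fst p"
    "0 < snd p + (fst p - snd p) * x"
proof -
  show 1: "snd p < snd p + (fst p - snd p) * x" "snd p + (fst p - snd p) * x < fst p"
    using p x lin_between[of "snd p" "fst p" x] by (auto simp: UF_def)
  then show "0 < snd p + (fst p - snd p) * x" using p by (auto simp: UF_def)
qed

context
  fixes a :: "real \<Rightarrow> real"
  assumes SR: "strongly_regular_scale_factor a"
begin

lemma f_pos_psi: "f_pos a \<tau> s = integral {s..\<tau>} (psi a \<tau> s)"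
  by (simp add: f_pos_def psi_def[abs_def])

lemma den2_pos: "0 \<le> t \<Longrightarrow> t < \<tau> \<Longrightarrow> (a \<tau>)\<^sup>2 - (a t)\<^sup>2 > 0"
proof -
  assume "0 \<le> t" "t < \<tau>"
  then have "a t < a \<tau>" "0 \<le> a t" using a_less[OF SR] a_nonneg[OF SR] by auto
  then have "(a t)\<^sup>2 < (a \<tau>)\<^sup>2" by (simp add: power_strict_mono)
  then show ?thesis by simp
qed

lemma UF_facts:
  assumes p: "p \<in> UF" and x: "x \<in> {0<..<1}"
  shows "sqrt ((a (fst p))\<^sup>2 - (a (snd p + (fst p - snd p) * x))\<^sup>2) \<noteq> 0"
    "(deriv a (snd p + (fst p - snd p) * x))\<^sup>2 \<noteq> 0"
proof -
  note t = UF_between[OF p x]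
  show "sqrt ((a (fst p))\<^sup>2 - (a (snd p + (fst p - snd p) * x))\<^sup>2) \<noteq> 0"
    using den2_pos[of "snd p + (fst p - snd p) * x" "fst p"] t by simp
  show "(deriv a (snd p + (fst p - snd p) * x))\<^sup>2 \<noteq> 0"
    using d1_pos[OF SR t(3)] by simp
qed

lemma Hs_cont1:
  assumes p: "p \<in> UF"
  shows "continuous_on {0<..<1} (Hs a p)"
  unfolding Hs_def psi_def
  apply (intro continuous_intros d1_cont_intro[OF SR] d2_cont_intro[OF SR] a_cont_intro[OF SR] ballI)
  using UF_facts[OF p] UF_between[OF p] p by (auto simp: UF_def)

lemma Hs_cont2:
  assumes x: "x \<in> {0<..<1}"
  shows "continuous_on UF (\<lambda>p. Hs a p x)"
  unfolding Hs_def psi_def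
  apply (intro continuous_intros d1_cont_intro[OF SR] d2_cont_intro[OF SR] a_cont_intro[OF SR] ballI)
  using UF_facts[OF _ x] UF_between[OF _ x] by (auto simp: UF_def)
    (use x in \<open>auto intro!: add_nonneg_nonneg mult_nonneg_nonneg\<close>)

lemma q_bound: "\<exists>K\<ge>1. \<forall>t>0. \<bar>deriv (deriv a) t / (deriv a t)\<^sup>2\<bar> \<le> K / a t"
proof -
  obtain K where K: "K \<ge> 1" and Kb: "\<forall>t>0. a t * deriv (deriv a) t / (deriv a t)\<^sup>2 \<ge> - K"
    using K_ex[OF SR] by blast
  show ?thesis
  proof (intro exI[of _ K] conjI K allI impI)
    fix t :: real assume t: "t > 0"
    define q where "q = deriv (deriv a) t / (deriv a t)\<^sup>2"
    have at: "a t > 0" using a_pos[OF SR t] .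
    have "a t * q \<ge> - K" "a t * q \<le> 1" using Kb Qup[OF SR t] t by (auto simp: q_def)
    then have "\<bar>a t * q\<bar> \<le> K" using K by (auto simp: abs_le_iff)
    then have "a t * \<bar>q\<bar> \<le> K" using at by (simp add: abs_mult)
    then have "\<bar>q\<bar> \<le> K / a t" using at by (simp add: field_simps)
    then show "\<bar>deriv (deriv a) t / (deriv a t)\<^sup>2\<bar> \<le> K / a t" by (simp add: q_def)
  qed
qed

lemma Hs_dom:
  assumes p0: "p0 \<in> UF"
  shows "\<exists>e>0. \<exists>C. \<forall>p\<in>UF. dist p p0 < e \<longrightarrow> (\<forall>x\<in>{0<..<1}. \<bar>Hs a p x\<bar> \<le> C / sqrt (1-x))"
proof -
  obtain K where K: "K \<ge> 1" and Kq: "\<forall>t>0. \<bar>deriv (deriv a) t / (deriv a t)\<^sup>2\<bar> \<le> K / a t"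
    using q_bound by blast
  define \<tau>0 where "\<tau>0 = fst p0"
  have \<tau>0: "\<tau>0 > 0" using p0 by (auto simp: UF_def \<tau>0_def)
  define \<alpha> where "\<alpha> = \<tau>0 / 2"
  define \<beta> where "\<beta> = 2 * \<tau>0"
  have \<alpha>\<beta>: "0 < \<alpha>" "\<alpha> \<le> \<beta>" using \<tau>0 by (auto simp: \<alpha>_def \<beta>_def)
  obtain c where c: "c > 0" and cKL: "\<forall>\<tau>\<in>{\<alpha>..\<beta>}. \<forall>u\<in>{0..\<tau>}. c * (\<tau> - u) \<le> a \<tau> - a u"
    using KL[OF SR \<alpha>\<beta>] by blast
  have a\<alpha>: "a \<alpha> > 0" using a_pos[OF SR] \<alpha>\<beta> by simp
  define k where "k = a \<alpha> * c"
  have k: "k > 0" using a\<alpha> c by (simp add: k_def)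
  define C1 where "C1 = \<beta> * (2 * K / a \<alpha>)"
  define C2 where "C2 = sqrt 2 * K * sqrt \<beta> / sqrt k"
  have C1: "C1 \<ge> 0" using K a\<alpha> \<alpha>\<beta> by (simp add: C1_def)
  have C2: "C2 \<ge> 0" using K k \<alpha>\<beta> by (simp add: C2_def)
  define e where "e = \<tau>0 / 2"
  have e: "e > 0" using \<tau>0 by (simp add: e_def)
  show ?thesis
  proof (rule exI[of _ e], intro conjI e exI[of _ "C1 + C2"] ballI impI)
    fix p and x :: real assume p: "p \<in> UF" and d: "dist p p0 < e" and x: "x \<in> {0<..<1}"
    define \<tau> where "\<tau> = fst p"
    define s where "s = snd p"
    define t where "t = s + (\<tau> - s) * x"
    have "dist \<tau> \<tau>0 < e"
      using d dist_fst_le[of p p0] by (auto simp: \<tau>_def \<tau>0_def)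
    then have "\<tau>0 - e < \<tau>" "\<tau> < \<tau>0 + e" by (auto simp: dist_real_def abs_less_iff)
    then have \<tau>r: "\<alpha> < \<tau>" "\<tau> < \<beta>" using \<tau>0 \<alpha>_def \<beta>_def e_def by linarith+
    have t: "s < t" "t < \<tau>" "0 < t" using UF_between[OF p x] by (auto simp: t_def s_def \<tau>_def)
    have s0: "0 \<le> s" using p by (simp add: UF_def s_def)
    define T where "T = a \<tau>"
    define y where "y = a t"
    define ys where "ys = a s"
    define q where "q = deriv (deriv a) t / (deriv a t)\<^sup>2"
    define \<phi> where "\<phi> = sqrt (T\<^sup>2 - ys\<^sup>2) / sqrt (T\<^sup>2 - y\<^sup>2) - 1"
    have y: "0 < y" "0 \<le> ys" "ys \<le> y" "y < T" "a \<alpha> \<le> T"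
      using a_pos[OF SR t(3)] a_nonneg[OF SR s0] a_le[OF SR s0, of t] a_less[OF SR, of t \<tau>] a_le[OF SR, of \<alpha> \<tau>]
        t \<tau>r \<alpha>\<beta> by (auto simp: y_def ys_def T_def)
    have qb: "\<bar>q\<bar> \<le> K / y" using Kq t by (simp add: q_def y_def)
    have \<phi>0: "\<phi> \<ge> 0"
    proof -
      have "ys\<^sup>2 \<le> y\<^sup>2" using y by (intro power_mono) auto
      then have "sqrt (T\<^sup>2 - y\<^sup>2) \<le> sqrt (T\<^sup>2 - ys\<^sup>2)" by simp
      moreover have "T\<^sup>2 - y\<^sup>2 > 0" using den2_pos[of t \<tau>] t by (simp add: T_def y_def)
      ultimately have "1 \<le> sqrt (T\<^sup>2 - ys\<^sup>2) / sqrt (T\<^sup>2 - y\<^sup>2)" by (simp add: le_divide_eq_1)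
      then show ?thesis by (simp add: \<phi>_def)
    qed
    have Hs_eq: "Hs a p x = (\<tau> - s) * (q * \<phi>)"
      by (simp add: Hs_def psi_def q_def \<phi>_def T_def y_def ys_def t_def \<tau>_def s_def)
    have abs_eq: "\<bar>Hs a p x\<bar> = (\<tau> - s) * (\<bar>q\<bar> * \<phi>)"
      using \<phi>0 t unfolding Hs_eq by (simp add: abs_mult)
    have z: "0 < sqrt (1 - x)" "sqrt (1 - x) \<le> 1" using x by auto
    have ws: "0 < \<tau> - s" "\<tau> - s \<le> \<beta>" using t s0 \<tau>r by auto
    show "\<bar>Hs a p x\<bar> \<le> (C1 + C2) / sqrt (1 - x)"
    proof (cases "y\<^sup>2 \<le> T\<^sup>2 / 2")
      case True
      have "\<bar>q\<bar> * \<phi> \<le> 2 * K / T"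
        unfolding \<phi>_def by (rule case1) (use y True qb K in auto)
      also have "\<dots> \<le> 2 * K / a \<alpha>" using y a\<alpha> K by (intro divide_left_mono) auto
      finally have "(\<tau> - s) * (\<bar>q\<bar> * \<phi>) \<le> \<beta> * (2 * K / a \<alpha>)"
        using ws \<phi>0 K a\<alpha> by (intro mult_mono) auto
      then have "\<bar>Hs a p x\<bar> \<le> C1" using abs_eq by (simp add: C1_def)
      also have "\<dots> \<le> C1 / sqrt (1 - x)"
      proof -
        have "C1 * sqrt (1 - x) \<le> C1 * 1" using z C1 by (intro mult_left_mono) auto
        then show ?thesis using z by (simp add: le_divide_eq)
      qed
      also have "\<dots> \<le> (C1 + C2) / sqrt (1 - x)" using z C2 by (intro divide_right_mono) auto
      finally show ?thesis .
    next
      case False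
      define Q where "Q = T\<^sup>2 - y\<^sup>2"
      have "\<bar>q\<bar> * \<phi> \<le> sqrt 2 * K / sqrt Q"
        unfolding \<phi>_def Q_def by (rule case2) (use y False qb K in auto)
      then have 1: "(\<tau> - s) * (\<bar>q\<bar> * \<phi>) \<le> (\<tau> - s) * (sqrt 2 * K / sqrt Q)"
        using ws by (intro mult_left_mono) auto
      have kQ: "k * (\<tau> - s) * (1 - x) \<le> Q"
      proof -
        have at: "0 \<le> a t" "a t \<le> a \<tau>" using y by (auto simp: y_def T_def)
        have "k * (\<tau> - s) * (1 - x) = a \<alpha> * (c * (\<tau> - t))" by (simp add: k_def t_def algebra_simps)
        also have "\<dots> \<le> a \<alpha> * (a \<tau> - a t)" using cKL t \<tau>r a\<alpha> by (intro mult_left_mono) auto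
        also have "\<dots> \<le> a \<tau> * (a \<tau> - a t)" using at y by (intro mult_right_mono) (auto simp: T_def)
        also have "\<dots> \<le> (a \<tau> + a t) * (a \<tau> - a t)" using at by (intro mult_right_mono) auto
        also have "\<dots> = Q" by (simp add: Q_def T_def y_def power2_eq_square algebra_simps)
        finally show ?thesis .
      qed
      have "(\<tau> - s) * (sqrt 2 * K / sqrt Q) \<le> (sqrt 2 * K * sqrt \<beta> / sqrt k) / sqrt (1 - x)"
        by (rule bound_aux) (use K k ws x kQ in auto)
      then have "\<bar>Hs a p x\<bar> \<le> C2 / sqrt (1 - x)" using 1 abs_eq by (simp add: C2_def)
      also have "\<dots> \<le> (C1 + C2) / sqrt (1 - x)" using z C1 by (intro divide_right_mono) auto
      finally show ?thesis .
    qed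
  qed
qed

end


context
  fixes a :: "real \<Rightarrow> real"
  assumes SR: "strongly_regular_scale_factor a"
begin

lemma Hs_psi: "Hs a p = (\<lambda>x. (fst p - snd p) * psi a (fst p) (snd p) (snd p + (fst p - snd p) * x))"
  by (simp add: Hs_def fun_eq_iff)

lemma Hs_integrable: "p \<in> UF \<Longrightarrow> Hs a p integrable_on {0<..<1}"
  using pic_integrable[of UF "Hs a", OF Hs_cont1[OF SR] Hs_cont2[OF SR] Hs_dom[OF SR]] by blast

lemma F_eq:
  assumes p: "p \<in> UF"
  shows "f_pos a (fst p) (snd p) = integral {0<..<1} (Hs a p)"
proof -
  have "(Hs a p has_integral integral {0<..<1} (Hs a p)) {0<..<1}"
    using Hs_integrable[OF p] by (simp add: integrable_integral)
  then have "(Hs a p has_integral integral {0<..<1} (Hs a p)) {0..1}"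
    using has_integral_open_interval[of _ _ 0 "1::real"] by auto
  then have "(psi a (fst p) (snd p) has_integral integral {0<..<1} (Hs a p)) {snd p..fst p}"
    using scale_back[of "snd p" "fst p" "psi a (fst p) (snd p)" "integral {0<..<1} (Hs a p)"] p
    by (simp add: UF_def Hs_psi)
  then show ?thesis unfolding f_pos_psi[OF SR] by (rule integral_unique)
qed

lemma F_cont: "continuous_on UF (\<lambda>p. f_pos a (fst p) (snd p))"
proof -
  have "continuous_on UF (\<lambda>p. integral {0<..<1} (Hs a p))"
    using pic_cont[of UF "Hs a", OF Hs_cont1[OF SR] Hs_cont2[OF SR] Hs_dom[OF SR]] by blast
  then show ?thesis using F_eq by (simp cong: continuous_on_cong)
qed

lemma F_cont_comp:
  assumes "continuous_on S g" "g ` S \<subseteq> UF"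
  shows "continuous_on S (\<lambda>x. f_pos a (fst (g x)) (snd (g x)))"
  using continuous_on_compose[OF assms(1) continuous_on_subset[OF F_cont assms(2)]] by (simp add: comp_def)

lemma f_cont: "continuous_on UR (\<lambda>p. f a (fst p) (snd p))"
proof -
  have eq: "(\<lambda>p. f a (fst p) (snd p)) = (\<lambda>p. if - snd p \<le> 0 then f_pos a (fst p) (snd p)
      else 2 * f_pos a (fst (fst p, 0::real)) (snd (fst p, 0::real)) - f_pos a (fst (fst p, - snd p)) (snd (fst p, - snd p)))"
    by (simp add: fun_eq_iff f_def)
  show ?thesis unfolding eq
  proof (rule continuous_on_cases_le)
    show "continuous_on {p \<in> UR. - snd p \<le> 0} (\<lambda>p. f_pos a (fst p) (snd p))"
      by (rule continuous_on_subset[OF F_cont]) (auto simp: UR_def UF_def)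
    show "continuous_on {p \<in> UR. 0 \<le> - snd p}
       (\<lambda>p. 2 * f_pos a (fst (fst p, 0::real)) (snd (fst p, 0::real)) - f_pos a (fst (fst p, - snd p)) (snd (fst p, - snd p)))"
      by (intro continuous_intros F_cont_comp) (auto simp: UR_def UF_def)
    show "continuous_on UR (\<lambda>p. - snd p)" by (intro continuous_intros)
    show "\<And>p. p \<in> UR \<Longrightarrow> - snd p = 0 \<Longrightarrow>
      f_pos a (fst p) (snd p) = 2 * f_pos a (fst (fst p, 0::real)) (snd (fst p, 0::real)) - f_pos a (fst (fst p, - snd p)) (snd (fst p, - snd p))"
      by simp
  qed
qed

lemma main: "continuous_on (domD a) (g_tautau a)"
proof -
  have eq: "g_tautau a = (\<lambda>q. - (1 - deriv a (fst q) * f a (fst (fst q, t0 a (fst q) (snd q))) (snd (fst q, t0 a (fst q) (snd q))))\<^sup>2)"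
    by (simp add: fun_eq_iff g_tautau_def case_prod_beta)
  have fc: "continuous_on (domD a) (\<lambda>q. f a (fst (fst q, t0 a (fst q) (snd q))) (snd (fst q, t0 a (fst q) (snd q))))"
  proof -
    have "continuous_on (domD a) (\<lambda>q. (fst q, t0 a (fst q) (snd q)))"
      by (intro continuous_intros t0_cont[OF SR])
    moreover have "(\<lambda>q. (fst q, t0 a (fst q) (snd q))) ` domD a \<subseteq> UR"
    proof
      fix z assume "z \<in> (\<lambda>q. (fst q, t0 a (fst q) (snd q))) ` domD a"
      then obtain q where q: "q \<in> domD a" and z: "z = (fst q, t0 a (fst q) (snd q))" by blast
      have q': "(fst q, snd q) \<in> domD a" using q by simp
      show "z \<in> UR" using t0_prop[OF SR q'] q' by (auto simp: z UR_def domD_def)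
    qed
    ultimately show ?thesis
      using continuous_on_compose[of "domD a" "\<lambda>q. (fst q, t0 a (fst q) (snd q))" "\<lambda>p. f a (fst p) (snd p)"]
        continuous_on_subset[OF f_cont] by (simp add: comp_def)
  qed
  have dc: "continuous_on (domD a) (\<lambda>q. deriv a (fst q))"
    by (rule d1_cont_intro[OF SR]) (auto intro: continuous_intros simp: domD_def)
  show ?thesis unfolding eq
    by (intro continuous_intros fc dc)
qed

end


theorem theorem5p4:
  fixes a :: "real \<Rightarrow> real"
  assumes "strongly_regular_scale_factor a"
  shows "continuous_on (domD a) (g_tautau a)"
  using main[OF assms] .

end
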